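(* Let $E$ be a directed graph such that each cycle is either without exits or extreme, and such that each infinite emitter lies on a cycle. If $H\subseteq E^0$ is hereditary and saturated, then no vertex of $R(H)-H$ lies on a cycle and each vertex of $R(H)-H$ is regular. Consequently, if $(H,S)$ is an admissible pair of $E$, then $B_H=S=\emptyset$.
   Context: A path is a vertex or finite sequence of edges $e_1\dots e_n$ with $\mathbf{r}(e_i)=\mathbf{s}(e_{i+1})$; $p^0$ is its vertex set. A cycle is a closed path of positive length whose edges have distinct sources; an exit of a cycle $c$ is an edge with source in $c^0$ not on $c$. A cycle $c$ is extreme if it has exits and for every path $p$ with $\mathbf{s}(p)\in c^0$ there is a path $q$ with $\mathbf{s}(q)=\mathbf{r}(p)$ and $\mathbf{r}(q)\in c^0$. An infinite emitter emits infinitely many edges; a sink emits none; a vertex is regular if it is neither. $u\ge v$ means there is a path (possibly of length 0) from $u$ to $v$; $R(V)=\{u\mid u\ge v$ for some $v\in V\}$. $H$ hereditary: closed under following paths; saturated: every regular $v$ with $\mathbf{r}(\mathbf{s}^{-1}(v))\subseteq H$ is in $H$. $B_H=\{v\in E^0-H\mid v$ is an infinite emitter and $\mathbf{s}^{-1}(v)\cap\mathbf{r}^{-1}(E^0-H)$ is nonempty and finite$\}$. An admissible pair is $(H,S)$ with $H$ hereditary saturated and $S\subseteq B_H$. *)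

theory Defs
  imports Main
begin

text \<open>A directed graph E is given by its source and range maps
  src, rng :: 'e \<Rightarrow> 'v; E^0 = UNIV :: 'v set, E^1 = UNIV :: 'e set.
  A path of positive length is a nonempty list of edges.\<close>

definition is_epath :: "('e \<Rightarrow> 'v) \<Rightarrow> ('e \<Rightarrow> 'v) \<Rightarrow> 'e list \<Rightarrow> bool" where
  "is_epath src rng p \<longleftrightarrow> p \<noteq> [] \<and>
     (\<forall>i. Suc i < length p \<longrightarrow> rng (p ! i) = src (p ! Suc i))"

definition path_verts :: "('e \<Rightarrow> 'v) \<Rightarrow> ('e \<Rightarrow> 'v) \<Rightarrow> 'e list \<Rightarrow> 'v set" where
  "path_verts src rng p = src ` set p \<union> rng ` set p"

text \<open>u \<ge> v: a path (possibly of length 0, i.e. u = v) from u to v.\<close>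
definition reaches :: "('e \<Rightarrow> 'v) \<Rightarrow> ('e \<Rightarrow> 'v) \<Rightarrow> 'v \<Rightarrow> 'v \<Rightarrow> bool" where
  "reaches src rng u v \<longleftrightarrow> u = v \<or>
     (\<exists>p. is_epath src rng p \<and> src (hd p) = u \<and> rng (last p) = v)"

definition is_cycle :: "('e \<Rightarrow> 'v) \<Rightarrow> ('e \<Rightarrow> 'v) \<Rightarrow> 'e list \<Rightarrow> bool" where
  "is_cycle src rng c \<longleftrightarrow> is_epath src rng c \<and> rng (last c) = src (hd c)
     \<and> distinct (map src c)"

definition is_exit :: "('e \<Rightarrow> 'v) \<Rightarrow> ('e \<Rightarrow> 'v) \<Rightarrow> 'e list \<Rightarrow> 'e \<Rightarrow> bool" where
  "is_exit src rng c e \<longleftrightarrow> src e \<in> path_verts src rng c \<and> e \<notin> set c"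

definition has_exits :: "('e \<Rightarrow> 'v) \<Rightarrow> ('e \<Rightarrow> 'v) \<Rightarrow> 'e list \<Rightarrow> bool" where
  "has_exits src rng c \<longleftrightarrow> (\<exists>e. is_exit src rng c e)"

text \<open>Extreme: has exits, and for every path p (a vertex or a path of positive length)
  with source in c^0 there is a path q from r(p) back into c^0.\<close>
definition extreme_cycle :: "('e \<Rightarrow> 'v) \<Rightarrow> ('e \<Rightarrow> 'v) \<Rightarrow> 'e list \<Rightarrow> bool" where
  "extreme_cycle src rng c \<longleftrightarrow> is_cycle src rng c \<and> has_exits src rng c \<and>
     (\<forall>v \<in> path_verts src rng c. \<exists>w \<in> path_verts src rng c. reaches src rng v w) \<and>
     (\<forall>p. is_epath src rng p \<and> src (hd p) \<in> path_verts src rng c \<longrightarrow>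
        (\<exists>w \<in> path_verts src rng c. reaches src rng (rng (last p)) w))"

definition on_cycle :: "('e \<Rightarrow> 'v) \<Rightarrow> ('e \<Rightarrow> 'v) \<Rightarrow> 'v \<Rightarrow> bool" where
  "on_cycle src rng v \<longleftrightarrow> (\<exists>c. is_cycle src rng c \<and> v \<in> path_verts src rng c)"

definition infinite_emitter :: "('e \<Rightarrow> 'v) \<Rightarrow> 'v \<Rightarrow> bool" where
  "infinite_emitter src v \<longleftrightarrow> infinite {e. src e = v}"

definition sink :: "('e \<Rightarrow> 'v) \<Rightarrow> 'v \<Rightarrow> bool" where
  "sink src v \<longleftrightarrow> {e. src e = v} = {}"

definition regular :: "('e \<Rightarrow> 'v) \<Rightarrow> 'v \<Rightarrow> bool" where
  "regular src v \<longleftrightarrow> \<not> infinite_emitter src v \<and> \<not> sink src v"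

definition hereditary :: "('e \<Rightarrow> 'v) \<Rightarrow> ('e \<Rightarrow> 'v) \<Rightarrow> 'v set \<Rightarrow> bool" where
  "hereditary src rng H \<longleftrightarrow> (\<forall>u \<in> H. \<forall>v. reaches src rng u v \<longrightarrow> v \<in> H)"

definition saturated :: "('e \<Rightarrow> 'v) \<Rightarrow> ('e \<Rightarrow> 'v) \<Rightarrow> 'v set \<Rightarrow> bool" where
  "saturated src rng H \<longleftrightarrow>
     (\<forall>v. regular src v \<and> rng ` {e. src e = v} \<subseteq> H \<longrightarrow> v \<in> H)"

definition Rset :: "('e \<Rightarrow> 'v) \<Rightarrow> ('e \<Rightarrow> 'v) \<Rightarrow> 'v set \<Rightarrow> 'v set" where
  "Rset src rng V = {u. \<exists>v \<in> V. reaches src rng u v}"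

definition breaking_verts :: "('e \<Rightarrow> 'v) \<Rightarrow> ('e \<Rightarrow> 'v) \<Rightarrow> 'v set \<Rightarrow> 'v set" where
  "breaking_verts src rng H = {v. v \<notin> H \<and> infinite_emitter src v \<and>
     {e. src e = v \<and> rng e \<notin> H} \<noteq> {} \<and> finite {e. src e = v \<and> rng e \<notin> H}}"

definition admissible_pair :: "('e \<Rightarrow> 'v) \<Rightarrow> ('e \<Rightarrow> 'v) \<Rightarrow> 'v set \<Rightarrow> 'v set \<Rightarrow> bool" where
  "admissible_pair src rng H S \<longleftrightarrow> hereditary src rng H \<and> saturated src rng H
     \<and> S \<subseteq> breaking_verts src rng H"

end

theory Submission
  imports Defs
begin

lemma epath_append:
  assumes "is_epath s r p" "is_epath s r q" "r (last p) = s (hd q)"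
  shows "is_epath s r (p @ q)"
  unfolding is_epath_def
proof (intro conjI allI impI)
  show "p @ q \<noteq> []" using assms(1) by (simp add: is_epath_def)
next
  fix i assume i: "Suc i < length (p @ q)"
  have p: "p \<noteq> []" "\<forall>i. Suc i < length p \<longrightarrow> r (p ! i) = s (p ! Suc i)"
    using assms(1) by (auto simp: is_epath_def)
  have q: "q \<noteq> []" "\<forall>i. Suc i < length q \<longrightarrow> r (q ! i) = s (q ! Suc i)"
    using assms(2) by (auto simp: is_epath_def)
  consider "Suc i < length p" | "Suc i = length p" | "Suc i > length p" by linarith
  then show "r ((p @ q) ! i) = s ((p @ q) ! Suc i)"
  proof cases
    case 1 then show ?thesis using p by (simp add: nth_append)
  next
    case 2
    then have "i = length p - 1" by simp
    then show ?thesis using 2 p q assms(3)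
      by (simp add: nth_append last_conv_nth hd_conv_nth)
  next
    case 3
    then have "Suc (i - length p) < length q" using i by auto
    then show ?thesis using 3 q by (simp add: nth_append Suc_diff_le)
  qed
qed

lemma reaches_trans:
  assumes "reaches s r u v" "reaches s r v w" shows "reaches s r u w"
proof -
  { assume "u \<noteq> v" "v \<noteq> w"
    then obtain p q where "is_epath s r p" "s (hd p) = u" "r (last p) = v"
      "is_epath s r q" "s (hd q) = v" "r (last q) = w"
      using assms by (auto simp: reaches_def)
    moreover have "p \<noteq> []" "q \<noteq> []" using calculation by (auto simp: is_epath_def)
    ultimately have "is_epath s r (p @ q)" "s (hd (p @ q)) = u" "r (last (p @ q)) = w"
      using epath_append[of s r p q] by auto
    then have ?thesis unfolding reaches_def by blast
  }
  then show ?thesis using assms by blast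
qed

lemma cycle_src0:
  assumes c: "is_cycle s r c" and k: "k < length c"
  shows "reaches s r (s (c ! 0)) (s (c ! k)) \<and> reaches s r (s (c ! k)) (s (c ! 0))"
proof
  have ep: "c \<noteq> []" "\<forall>i. Suc i < length c \<longrightarrow> r (c ! i) = s (c ! Suc i)"
    "r (last c) = s (hd c)"
    using c by (auto simp: is_cycle_def is_epath_def)
  show "reaches s r (s (c ! 0)) (s (c ! k))"
  proof (cases "k = 0")
    case False
    have "is_epath s r (take k c)" unfolding is_epath_def
    proof (intro conjI allI impI)
      show "take k c \<noteq> []" using ep False by simp
      fix i assume "Suc i < length (take k c)"
      then show "r (take k c ! i) = s (take k c ! Suc i)" using ep(2) k by simp
    qed
    moreover have "s (hd (take k c)) = s (c ! 0)" using False ep by (simp add: hd_conv_nth)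
    moreover have "r (last (take k c)) = s (c ! k)" using False k ep
      by (simp add: last_conv_nth)
    ultimately show ?thesis unfolding reaches_def by blast
  qed (simp add: reaches_def)
  show "reaches s r (s (c ! k)) (s (c ! 0))"
  proof -
    have "is_epath s r (drop k c)" unfolding is_epath_def
    proof (intro conjI allI impI)
      show "drop k c \<noteq> []" using k by simp
      fix i assume "Suc i < length (drop k c)"
      then have "Suc (k + i) < length c" by simp
      then show "r (drop k c ! i) = s (drop k c ! Suc i)" using ep(2) k by simp
    qed
    moreover have "s (hd (drop k c)) = s (c ! k)" using k by (simp add: hd_drop_conv_nth)
    moreover have "r (last (drop k c)) = s (c ! 0)" using k ep by (simp add: hd_conv_nth)
    ultimately show ?thesis unfolding reaches_def by blast
  qed
qed

lemma cycle_pv: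
  assumes c: "is_cycle s r c" and x: "x \<in> path_verts s r c"
  shows "reaches s r (s (c ! 0)) x \<and> reaches s r x (s (c ! 0))"
proof -
  have ep: "c \<noteq> []" "\<forall>i. Suc i < length c \<longrightarrow> r (c ! i) = s (c ! Suc i)"
    "r (last c) = s (hd c)"
    using c by (auto simp: is_cycle_def is_epath_def)
  obtain k where k: "k < length c" and "x = s (c ! k) \<or> x = r (c ! k)"
    using x by (auto simp: path_verts_def in_set_conv_nth)
  have "\<exists>j < length c. x = s (c ! j)"
  proof (cases "x = s (c ! k)")
    case False
    then have xr: "x = r (c ! k)" using \<open>x = s (c ! k) \<or> x = r (c ! k)\<close> by blast
    show ?thesis
    proof (cases "Suc k < length c")
      case True
      then have "x = s (c ! Suc k)" using xr ep(2) by simp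
      then show ?thesis using True by blast
    next
      case False
      then have "k = length c - 1" using k by simp
      then have "x = r (last c)" using xr ep(1) by (simp add: last_conv_nth)
      then have "x = s (c ! 0)" using ep by (simp add: hd_conv_nth)
      then show ?thesis using ep(1) by blast
    qed
  qed (use k in blast)
  then obtain j where "j < length c" "x = s (c ! j)" by blast
  then show ?thesis using cycle_src0[OF c, of j] by simp
qed

lemma cycle_reach:
  assumes "is_cycle s r c" "x \<in> path_verts s r c" "y \<in> path_verts s r c"
  shows "reaches s r x y"
proof -
  have "reaches s r x (s (c ! 0))" using cycle_pv[OF assms(1,2)] by simp
  moreover have "reaches s r (s (c ! 0)) y" using cycle_pv[OF assms(1,3)] by simp
  ultimately show ?thesis by (rule reaches_trans)
qed

lemma noexit_stay:
  assumes ne: "\<not> has_exits s r c" and p: "is_epath s r p" and h: "s (hd p) \<in> path_verts s r c"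
  shows "r (last p) \<in> path_verts s r c"
proof -
  have step: "\<And>e. s e \<in> path_verts s r c \<Longrightarrow> r e \<in> path_verts s r c"
    using ne by (auto simp: has_exits_def is_exit_def path_verts_def)
  have ep: "p \<noteq> []" "\<forall>i. Suc i < length p \<longrightarrow> r (p ! i) = s (p ! Suc i)"
    using p by (auto simp: is_epath_def)
  have "i < length p \<Longrightarrow> s (p ! i) \<in> path_verts s r c" for i
  proof (induction i)
    case 0 then show ?case using h ep by (simp add: hd_conv_nth)
  next
    case (Suc i) then show ?case using step ep by (metis Suc_lessD)
  qed
  then show ?thesis using ep step by (simp add: last_conv_nth)
qed

theorem lemma3p13:
  fixes src rng :: "'e \<Rightarrow> 'v"
  assumes cyc: "\<And>c. is_cycle src rng c \<Longrightarrow>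
                  \<not> has_exits src rng c \<or> extreme_cycle src rng c"
      and inf: "\<And>v. infinite_emitter src v \<Longrightarrow> on_cycle src rng v"
  shows "(\<forall>H. hereditary src rng H \<and> saturated src rng H \<longrightarrow>
            (\<forall>v \<in> Rset src rng H - H. \<not> on_cycle src rng v \<and> regular src v))
       \<and> (\<forall>H S. admissible_pair src rng H S \<longrightarrow>
            breaking_verts src rng H = {} \<and> S = {})"
proof -
  have main: "\<not> on_cycle src rng v \<and> regular src v"
    if her: "hereditary src rng H" and v: "v \<in> Rset src rng H - H" for H v
  proof -
    obtain h where hH: "h \<in> H" and vh: "reaches src rng v h" using v by (auto simp: Rset_def)
    have "v \<noteq> h" using v hH by auto
    then obtain p where p: "is_epath src rng p" "src (hd p) = v" "rng (last p) = h"
      using vh by (auto simp: reaches_def)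
    have noc: "\<not> on_cycle src rng v"
    proof
      assume "on_cycle src rng v"
      then obtain c where c: "is_cycle src rng c" "v \<in> path_verts src rng c"
        by (auto simp: on_cycle_def)
      have "\<exists>w \<in> path_verts src rng c. reaches src rng h w"
      proof (cases "has_exits src rng c")
        case True
        then have ex: "extreme_cycle src rng c" using cyc c(1) by blast
        have "src (hd p) \<in> path_verts src rng c" using p(2) c(2) by simp
        then have "\<exists>w \<in> path_verts src rng c. reaches src rng (rng (last p)) w"
          using ex p(1) unfolding extreme_cycle_def by simp
        then show ?thesis using p(3) by simp
      next
        case False
        have "src (hd p) \<in> path_verts src rng c" using p(2) c(2) by simp
        then have "h \<in> path_verts src rng c" using noexit_stay[OF False p(1)] p(3) by simp
        then show ?thesis unfolding reaches_def by blast
      qed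
      then obtain w where w: "w \<in> path_verts src rng c" "reaches src rng h w" by blast
      have "reaches src rng h v" using reaches_trans[OF w(2) cycle_reach[OF c(1) w(1) c(2)]] .
      then have "v \<in> H" using her hH unfolding hereditary_def by blast
      then show False using v by simp
    qed
    moreover have "regular src v"
      unfolding regular_def
    proof
      show "\<not> infinite_emitter src v" using inf noc by blast
      have "p \<noteq> []" using p by (simp add: is_epath_def)
      then show "\<not> sink src v" using p by (auto simp: sink_def)
    qed
    ultimately show ?thesis by blast
  qed
  have bv: "breaking_verts src rng H = {}" if her: "hereditary src rng H" for H
  proof (rule ccontr)
    assume "breaking_verts src rng H \<noteq> {}"
    then obtain v where v: "v \<notin> H" "infinite_emitter src v"
      "finite {e. src e = v \<and> rng e \<notin> H}" by (auto simp: breaking_verts_def)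
    have "{e. src e = v} \<subseteq> {e. src e = v \<and> rng e \<notin> H} \<union> {e. src e = v \<and> rng e \<in> H}" by auto
    moreover have "infinite {e. src e = v}" using v(2) by (simp add: infinite_emitter_def)
    ultimately have "{e. src e = v \<and> rng e \<in> H} \<noteq> {}"
      using v(3) by (metis finite.emptyI finite_Un finite_subset)
    then obtain e where e: "src e = v" "rng e \<in> H" by auto
    have "is_epath src rng [e]" by (simp add: is_epath_def)
    then have "reaches src rng v (rng e)" using e unfolding reaches_def by force
    then have "v \<in> Rset src rng H - H" using e v by (auto simp: Rset_def)
    then show False using main[OF her] v(2) by (auto simp: regular_def)
  qed
  show ?thesis
  proof (intro conjI allI impI ballI)
    fix H v assume "hereditary src rng H \<and> saturated src rng H" "v \<in> Rset src rng H - H"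
    then show "\<not> on_cycle src rng v" "regular src v" using main by blast+
  next
    fix H S assume a: "admissible_pair src rng H S"
    then have "hereditary src rng H" "S \<subseteq> breaking_verts src rng H"
      unfolding admissible_pair_def by blast+
    then show "breaking_verts src rng H = {}" "S = {}" using bv by blast+
  qed
qed

end
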